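(* Let $f:\{0,1\}^n\to\{0,1\}^m$ be a Boolean function which is either constant or balanced. For each $i=0,\dots,m-1$ run the algorithm $\mathrm{GPK}(\mathbf{e}_i)$ and let $\delta_i\in\{0,1\}^n$ be its output. If $f$ is constant, then with certainty $\delta_i=\mathbf{0}$ for all $i$; if $f$ is balanced, then with certainty $\delta_i\neq\mathbf{0}$ for at least one $i$. Consequently, deciding "constant" if all $\delta_i=\mathbf{0}$ and "balanced" otherwise is always correct.
   Context: A function $f:\{0,1\}^n\to\{0,1\}^m$ is constant if $f(\mathbf{x})$ is the same for all $\mathbf{x}$, and balanced if it takes exactly two distinct values, each on exactly half of the inputs. Bits are indexed from the right starting at $0$ and $\mathbf{e}_i=0^{m-1-i}\,1\,0^{i}\in\{0,1\}^m$. For strings $\mathbf{y},\mathbf{z}$ of equal length, $\mathbf{y}\oplus\mathbf{z}$ is bitwise XOR and $\mathbf{y}\cdot\mathbf{z}=\bigoplus_j y_jz_j$. $\mathbf{U}_f$ is the unitary with $\mathbf{U}_f(\ket{\mathbf{x}}_n\otimes\ket{\mathbf{z}}_m)=\ket{\mathbf{x}}_n\otimes\ket{\mathbf{z}\oplus f(\mathbf{x})}_m$; $\mathbf{H}_k=\mathbf{H}^{\otimes k}$ with $\mathbf{H}$ the one-qubit Hadamard gate. The algorithm $\mathrm{GPK}(\mathbf{y})$ for $\mathbf{y}\in\{0,1\}^m$: start in $\ket{\mathbf{0}}_n\otimes\ket{\mathbf{0}}_m$; apply Pauli $\mathbf{X}$ gates to get $\ket{\mathbf{0}}_n\otimes\ket{\mathbf{y}}_m$;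 apply $\mathbf{H}_{n+m}$; apply $\mathbf{U}_f$; apply $\mathbf{H}_n$ to the first register; measure the first register in the computational basis, giving the output in $\{0,1\}^n$. *)

theory Defs
  imports Complex_Main
begin

text \<open>A bit string in {0,1}^k is encoded as a natural number below 2^k,
  bit i (indexed from the right, starting at 0) being bit i of the number.
  So e_i corresponds to 2^i, the zero string to 0, and XOR is the bitwise xor on nat.
  A state of the (n+m)-qubit system is a function nat => complex on basis indices
  below 2^(n+m); the basis state |x>_n (x) |z>_m has index x * 2^m + z, so the
  first register occupies qubits m..m+n-1 and the second register qubits 0..m-1.\<close>

type_synonym state = "nat \<Rightarrow> complex"

definition const_fun :: "nat \<Rightarrow> (nat \<Rightarrow> nat) \<Rightarrow> bool" where
  "const_fun n f \<longleftrightarrow> (\<exists>c. \<forall>x<2^n. f x = c)"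

definition balanced_fun :: "nat \<Rightarrow> (nat \<Rightarrow> nat) \<Rightarrow> bool" where
  "balanced_fun n f \<longleftrightarrow> (\<exists>a b. a \<noteq> b \<and> f ` {..<2^n} = {a, b}
      \<and> 2 * card {x. x < 2^n \<and> f x = a} = 2^n
      \<and> 2 * card {x. x < 2^n \<and> f x = b} = 2^n)"

definition pauliX :: "nat \<Rightarrow> state \<Rightarrow> state" where
  "pauliX j \<psi> = (\<lambda>k. \<psi> (flip_bit j k))"

definition hadamard :: "nat \<Rightarrow> state \<Rightarrow> state" where
  "hadamard j \<psi> = (\<lambda>k. (\<psi> (unset_bit j k) + (if bit k j then -1 else 1) * \<psi> (set_bit j k))
                        / complex_of_real (sqrt 2))"

definition hadamards :: "nat list \<Rightarrow> state \<Rightarrow> state" where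
  "hadamards js \<psi> = fold hadamard js \<psi>"

text \<open>U_f: |x>|z> |-> |x>|z xor f x>, with m qubits in the second register.\<close>
definition Uf :: "nat \<Rightarrow> (nat \<Rightarrow> nat) \<Rightarrow> state \<Rightarrow> state" where
  "Uf m f \<psi> = (\<lambda>k. \<psi> ((k div 2^m) * 2^m + (xor (k mod 2^m) (f (k div 2^m)))))"

definition init_state :: state where
  "init_state = (\<lambda>k. if k = 0 then 1 else 0)"

definition gpk_state :: "nat \<Rightarrow> nat \<Rightarrow> (nat \<Rightarrow> nat) \<Rightarrow> nat \<Rightarrow> state" where
  "gpk_state n m f y =
     (let s1 = fold pauliX (filter (\<lambda>j. bit y j) [0..<m]) init_state;
          s2 = hadamards [0..<n+m] s1;
          s3 = Uf m f s2
      in hadamards [m..<m+n] s3)"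

definition gpk_prob :: "nat \<Rightarrow> nat \<Rightarrow> (nat \<Rightarrow> nat) \<Rightarrow> nat \<Rightarrow> nat \<Rightarrow> real" where
  "gpk_prob n m f y \<delta> = (\<Sum>z<2^m. (cmod (gpk_state n m f y (\<delta> * 2^m + z)))^2)"

end

theory Submission
  imports Defs
begin

lemma unset_bit_nat: "unset_bit j (k::nat) = (if bit k j then k - 2^j else k)"
proof -
  have a: "set_bit j (unset_bit j k) = set_bit j k"
    by (auto simp: bit_eq_iff bit_simps)
  have b: "set_bit j (unset_bit j k) = unset_bit j k + 2^j"
    using set_bit_eq[of j "unset_bit j k"] by (simp add: bit_simps)
  have c: "set_bit j k = k + of_bool (\<not> bit k j) * 2^j" by (rule set_bit_eq)
  show ?thesis
  proof (cases "bit k j")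
    case True then show ?thesis using a b c by simp
  next
    case False
    then have "unset_bit j k = k" by (intro bit_eqI) (auto simp: bit_unset_bit_iff)
    then show ?thesis using False by simp
  qed
qed

lemma split_decomp:
  fixes q t j :: nat assumes "t < 2^j"
  shows "bit (q*2^j + t) j = odd q"
    and "set_bit j (q*2^j + t) = (2*(q div 2) + 1)*2^j + t"
    and "unset_bit j (q*2^j + t) = (2*(q div 2))*2^j + t"
proof -
  have d: "(q*2^j + t) div 2^j = q" using assms by simp
  show bq: "bit (q*2^j + t) j = odd q" by (simp add: bit_iff_odd d)
  obtain p where p: "q = 2*p \<or> q = 2*p+1" by (metis dvd_def oddE)
  show "set_bit j (q*2^j + t) = (2*(q div 2) + 1)*2^j + t"
    using set_bit_eq[of j "q*2^j+t"] bq p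
    by (elim disjE) (simp_all add: algebra_simps)
  show "unset_bit j (q*2^j + t) = (2*(q div 2))*2^j + t"
    using unset_bit_nat[of j "q*2^j+t"] bq p
    by (elim disjE) (simp_all add: algebra_simps)
qed

definition sgnb :: "bool \<Rightarrow> complex" where "sgnb b = (if b then -1 else 1)"

fun chi :: "nat \<Rightarrow> nat \<Rightarrow> nat \<Rightarrow> complex" where
  "chi 0 x u = 1"
| "chi (Suc n) x u = chi n x u * sgnb (bit x n \<and> bit u n)"

definition W :: "nat \<Rightarrow> (nat \<Rightarrow> complex) \<Rightarrow> nat \<Rightarrow> complex" where
  "W n \<phi> x = (\<Sum>u<2^n. chi n x u * \<phi> u) / (complex_of_real (sqrt 2))^n"

lemma chi_cong: "(\<forall>j<n. bit x j = bit x' j \<and> bit u j = bit u' j) \<Longrightarrow> chi n x u = chi n x' u'"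
  by (induction n) auto

lemma chi_mod: "chi n x u = chi n (x mod 2^n) (u mod 2^n)"
  by (rule chi_cong) (simp flip: take_bit_eq_mod add: bit_take_bit_iff)

lemma sum_lessThan_add: "(\<Sum>u<a+b. g u) = (\<Sum>u<a. g u) + (\<Sum>u<(b::nat). g (a + u))"
  by (induction b) (simp_all add: add.assoc)

lemma sum_split2: "(\<Sum>u<2^Suc n. g u) = (\<Sum>u<2^n. g u) + (\<Sum>u<(2::nat)^n. g (u + 2^n))"
proof -
  have "(\<Sum>u<2^Suc n. g u) = (\<Sum>u<2^n + 2^n. g u)" by (simp add: mult_2)
  also have "\<dots> = (\<Sum>u<2^n. g u) + (\<Sum>u<(2::nat)^n. g (2^n + u))"
    by (rule sum_lessThan_add) 
  finally show ?thesis by (simp add: add.commute)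
qed

lemma bit_small: "u < 2^n \<Longrightarrow> \<not> bit (u::nat) n"
  by (simp add: bit_iff_odd)

lemma hadamards_snoc: "hadamards (xs @ [j]) \<psi> = hadamard j (hadamards xs \<psi>)"
  by (simp add: hadamards_def)

lemma had_range:
  "x < 2^n \<Longrightarrow> r < 2^m \<Longrightarrow>
   hadamards [m..<m+n] \<psi> (h*2^(m+n) + x*2^m + r) = W n (\<lambda>u. \<psi> (h*2^(m+n) + u*2^m + r)) x"
proof (induction n arbitrary: h x)
  case 0
  then show ?case by (simp add: hadamards_def W_def)
next
  case (Suc n)
  define x0 where "x0 = x mod 2^n"
  define b where "b = x div 2^n"
  have x0: "x0 < 2^n" unfolding x0_def by simp
  have b: "b < 2" using Suc.prems(1) unfolding b_def by (simp add: less_mult_imp_div_less)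
  have b01: "b = 0 \<or> b = 1" using b by auto
  have xe: "x = b*2^n + x0" unfolding x0_def b_def by (rule div_mult_mod_eq[symmetric])
  define t where "t = x0*2^m + r"
  have t: "t < 2^(m+n)"
  proof -
    have "x0*2^m + r < x0*2^m + 2^m" using Suc.prems(2) by simp
    also have "\<dots> = (x0+1)*2^m" by simp
    also have "\<dots> \<le> 2^n*2^m" using x0 by (intro mult_right_mono) auto
    finally show ?thesis unfolding t_def by (simp add: power_add mult.commute)
  qed
  have k: "h*2^(m+Suc n) + x*2^m + r = (2*h+b)*2^(m+n) + t"
    unfolding t_def xe by (simp add: algebra_simps power_add)
  let ?\<phi> = "hadamards [m..<m+n] \<psi>"
  have "hadamards [m..<m+Suc n] \<psi> = hadamard (m+n) ?\<phi>"
    by (simp add: hadamards_snoc)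
  then have "hadamards [m..<m+Suc n] \<psi> (h*2^(m+Suc n) + x*2^m + r)
     = (?\<phi> ((2*h)*2^(m+n) + t) + sgnb (b = 1) * ?\<phi> ((2*h+1)*2^(m+n) + t)) / complex_of_real (sqrt 2)"
    unfolding k hadamard_def using split_decomp[OF t, of "2*h+b"] b01
    by (elim disjE) (auto simp: sgnb_def)
  also have "\<dots> = (W n (\<lambda>u. \<psi> ((2*h)*2^(m+n) + u*2^m + r)) x0
        + sgnb (b = 1) * W n (\<lambda>u. \<psi> ((2*h+1)*2^(m+n) + u*2^m + r)) x0) / complex_of_real (sqrt 2)"
    unfolding t_def using Suc.IH[OF x0 Suc.prems(2), of "2*h"] Suc.IH[OF x0 Suc.prems(2), of "2*h+1"]
    by (simp only: add.assoc)
  also have "\<dots> = W (Suc n) (\<lambda>u. \<psi> (h*2^(m+Suc n) + u*2^m + r)) x"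
  proof -
    have c1: "chi (Suc n) x u = chi n x0 u" if "u < 2^n" for u
      using that bit_small[OF that] chi_mod[of n x u] by (simp add: x0_def sgnb_def)
    have c2: "chi (Suc n) x (u + 2^n) = chi n x0 u * sgnb (b = 1)" if "u < 2^n" for u
    proof -
      have "chi n x (u + 2^n) = chi n x0 u"
        using that chi_mod[of n x "u+2^n"] by (simp add: x0_def)
      moreover have "bit (u + 2^n) n" using split_decomp(1)[OF that, of 1] by (simp add: add.commute)
      moreover have "bit x n = (b = 1)" using split_decomp(1)[OF x0, of b] b01 xe by auto
      ultimately show ?thesis by simp
    qed
    have i1: "h*2^(m+Suc n) + u*2^m + r = (2*h)*2^(m+n) + u*2^m + r" for u
      by (simp add: power_add)
    have i2: "(2*h)*2^(m+n) + (u+2^n)*2^m + r = (2*h+1)*2^(m+n) + u*2^m + r" for u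
      by (simp add: power_add algebra_simps)
    have s: "(\<Sum>u<2^Suc n. chi (Suc n) x u * \<psi> (h*2^(m+Suc n) + u*2^m + r))
       = (\<Sum>u<2^n. chi n x0 u * \<psi> ((2*h)*2^(m+n) + u*2^m + r))
         + sgnb (b = 1) * (\<Sum>u<2^n. chi n x0 u * \<psi> ((2*h+1)*2^(m+n) + u*2^m + r))"
      unfolding sum_split2 i1 unfolding i2 sum_distrib_left
      by (intro arg_cong2[where f="(+)"] sum.cong) (auto simp del: chi.simps simp: c1 c2)
    show ?thesis unfolding W_def s
      by (simp add: field_simps)
  qed
  finally show ?case .
qed

lemma xor_lt: "(a::nat) < 2^m \<Longrightarrow> b < 2^m \<Longrightarrow> xor a b < 2^m"
proof -
  assume "a < 2^m" "b < 2^m"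
  then have "take_bit m (xor a b) = xor a b"
  proof -
    have "take_bit m a = a" "take_bit m b = b" using \<open>a < 2^m\<close> \<open>b < 2^m\<close>
      by (simp_all add: take_bit_nat_eq_self_iff)
    then show ?thesis by (simp add: take_bit_xor)
  qed
  then show ?thesis by (metis take_bit_nat_less_exp)
qed

lemma bit_low: "(t::nat) < 2^m \<Longrightarrow> i < m \<Longrightarrow> bit (q*2^m + t) i = bit t i"
proof -
  assume a: "t < 2^m" "i < m"
  have "(q*2^m + t) mod 2^m = t" using a by simp
  then have "take_bit m (q*2^m + t) = t" by (simp add: take_bit_eq_mod)
  then show ?thesis using a by (metis bit_take_bit_iff)
qed

lemma bit_high: "(a::nat) < 2^m \<Longrightarrow> m \<le> j \<Longrightarrow> \<not> bit a j"
proof -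
  assume "a < 2^m" "m \<le> j"
  then have "a < 2^j" using power_increasing[of m j "2::nat"] by linarith
  then show ?thesis by (rule bit_small)
qed

lemma chi_exp: "chi N k (2^i) = (if i < N then sgnb (bit k i) else 1)"
  by (induction N) (auto simp: bit_exp_iff sgnb_def less_Suc_eq)

lemma chi_zero: "chi n 0 u = 1"
  by (induction n) (auto simp: sgnb_def)

lemma sgnb_xor: "sgnb (p \<noteq> q) = sgnb p * sgnb q"
  by (auto simp: sgnb_def)

lemma cmod_sgnb: "cmod (sgnb p) = 1"
  by (auto simp: sgnb_def)

lemma s1_eq: "i < m \<Longrightarrow> fold pauliX (filter (\<lambda>j. bit ((2::nat)^i) j) [0..<m]) init_state
   = (\<lambda>k. if k = 2^i then 1 else 0)"
proof -
  assume im: "i < m"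
  have "filter (\<lambda>j. bit ((2::nat)^i) j) [0..<m] = filter (\<lambda>j. j = i) [0..<m]"
    by (simp add: bit_exp_iff)
  also have "\<dots> = [i]"
    using im by (induction m) auto
  finally have "filter (\<lambda>j. bit ((2::nat)^i) j) [0..<m] = [i]" .
  moreover have "flip_bit i k = 0 \<longleftrightarrow> k = 2^i" for k :: nat
  proof
    assume "flip_bit i k = 0"
    then have "flip_bit i (flip_bit i k) = flip_bit i 0" by simp
    then show "k = 2^i" by (simp add: flip_bit_def xor.assoc)
  next
    assume "k = 2^i" then show "flip_bit i k = 0"
      by (intro bit_eqI) (auto simp: bit_simps)
  qed
  ultimately show ?thesis
    by (auto simp: pauliX_def init_state_def)
qed

lemma state_val:
  assumes range: "\<forall>x<2^n. f x < 2^m" and im: "i < m" and z: "z < 2^m"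
  shows "gpk_state n m f (2^i) z =
     sgnb (bit z i) * (\<Sum>u<2^n. sgnb (bit (f u) i)) / ((complex_of_real (sqrt 2))^(n+m) * (complex_of_real (sqrt 2))^n)"
proof -
  define c where "c = complex_of_real (sqrt 2)"
  define s1 :: state where "s1 = (\<lambda>k. if k = 2^i then 1 else 0)"
  define s2 where "s2 = hadamards [0..<n+m] s1"
  define s3 where "s3 = Uf m f s2"
  have iN: "i < n + m" using im by simp
  have s2v: "s2 k = sgnb (bit k i) / c^(n+m)" if k: "k < 2^(n+m)" for k
  proof -
    have "s2 k = W (n+m) s1 k"
      using had_range[of k "n+m" 0 0 s1 0] k unfolding s2_def by simp
    also have "\<dots> = chi (n+m) k (2^i) / c^(n+m)"
    proof -
      have "2^i < (2::nat)^(n+m)" using iN by simp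
      then have "(\<Sum>u<2^(n+m). chi (n+m) k u * s1 u) = chi (n+m) k (2^i)"
        unfolding s1_def by (simp add: if_distrib[of "\<lambda>z. chi (n+m) k _ * z"] cong: if_cong)
      then show ?thesis unfolding W_def c_def by simp
    qed
    finally show ?thesis using iN by (simp add: chi_exp)
  qed
  have s3v: "s3 (u*2^m + z) = sgnb (bit z i) * sgnb (bit (f u) i) / c^(n+m)" if u: "u < 2^n" for u
  proof -
    have fu: "f u < 2^m" using range u by simp
    have xl: "xor z (f u) < 2^m" using xor_lt[OF z fu] .
    have "s3 (u*2^m + z) = s2 (u*2^m + xor z (f u))"
      unfolding s3_def Uf_def using z by simp
    also have "u*2^m + xor z (f u) < 2^(n+m)"
    proof -
      have "u*2^m + xor z (f u) < u*2^m + 2^m" using xl by simp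
      also have "\<dots> = (u+1)*2^m" by simp
      also have "\<dots> \<le> 2^n*2^m" using u by (intro mult_right_mono) auto
      finally show ?thesis by (simp add: power_add)
    qed
    then have "s2 (u*2^m + xor z (f u)) = sgnb (bit (u*2^m + xor z (f u)) i) / c^(n+m)"
      by (rule s2v)
    also have "bit (u*2^m + xor z (f u)) i = (bit z i \<noteq> bit (f u) i)"
      using bit_low[OF xl im] by (simp add: bit_xor_iff)
    finally show ?thesis by (simp add: sgnb_def)
  qed
  have "gpk_state n m f (2^i) z = hadamards [m..<m+n] s3 z"
    unfolding gpk_state_def Let_def s3_def s2_def s1_def using s1_eq[OF im] by simp
  also have "\<dots> = W n (\<lambda>u. s3 (u*2^m + z)) 0"
    using had_range[of 0 n z m s3 0] z by simp
  also have "\<dots> = (\<Sum>u<2^n. sgnb (bit z i) * sgnb (bit (f u) i) / c^(n+m)) / c^n"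
    unfolding W_def chi_zero by (simp add: s3v c_def)
  also have "\<dots> = sgnb (bit z i) * (\<Sum>u<2^n. sgnb (bit (f u) i)) / (c^(n+m) * c^n)"
    by (simp add: sum_distrib_left sum_divide_distrib)
  finally show ?thesis unfolding c_def .
qed

lemma sqrt2_pow: "(sqrt 2 ^ k)^2 = (2::real)^k"
  by (simp add: power_mult_distrib[symmetric] power_mult[symmetric] mult.commute[of k 2] power_mult real_sqrt_pow2)

lemma prob_val:
  assumes range: "\<forall>x<2^n. f x < 2^m" and im: "i < m"
  shows "gpk_prob n m f (2^i) 0 = (cmod (\<Sum>u<2^n. sgnb (bit (f u) i)))^2 / (2^n)^2"
proof -
  define S where "S = (\<Sum>u<2^n. sgnb (bit (f u) i))"
  have t: "(cmod (gpk_state n m f (2^i) z))^2 = (cmod S)^2 / (2^(n+m) * 2^n)"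
    if z: "z < 2^m" for z
  proof -
    have "cmod (gpk_state n m f (2^i) z) = cmod S / (sqrt 2 ^ (n+m) * sqrt 2 ^ n)"
      using state_val[OF range im z] unfolding S_def
      by (simp add: norm_mult norm_divide norm_power cmod_sgnb)
    then show ?thesis by (simp add: power_divide power_mult_distrib sqrt2_pow)
  qed
  have "gpk_prob n m f (2^i) 0 = (\<Sum>z<(2::nat)^m. (cmod S)^2 / (2^(n+m) * 2^n))"
    unfolding gpk_prob_def by (rule sum.cong) (simp_all add: t)
  also have "\<dots> = (cmod S)^2 / (2^n)^2"
    by (simp add: power_add power2_eq_square field_simps)
  finally show ?thesis unfolding S_def .
qed

theorem theorem3p4:
  fixes n m :: nat and f :: "nat \<Rightarrow> nat"
  assumes range: "\<forall>x<2^n. f x < 2^m"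
    and cb: "const_fun n f \<or> balanced_fun n f"
  shows "(const_fun n f \<longrightarrow> (\<forall>i<m. gpk_prob n m f (2^i) 0 = 1))
       \<and> (balanced_fun n f \<longrightarrow> (\<Prod>i<m. gpk_prob n m f (2^i) 0) = 0)"
proof (intro conjI impI allI)
  fix i assume cf: "const_fun n f" and im: "i < m"
  then obtain c where c: "\<forall>x<2^n. f x = c" unfolding const_fun_def by blast
  have "(\<Sum>u<(2::nat)^n. sgnb (bit (f u) i)) = (\<Sum>u<(2::nat)^n. sgnb (bit c i))"
    by (rule sum.cong) (simp_all add: c)
  also have "\<dots> = of_nat (2^n) * sgnb (bit c i)" by simp
  finally have "cmod (\<Sum>u<(2::nat)^n. sgnb (bit (f u) i)) = 2^n"
    by (simp add: norm_mult cmod_sgnb norm_power)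
  then show "gpk_prob n m f (2^i) 0 = 1"
    using prob_val[OF range im] by simp
next
  assume "balanced_fun n f"
  then obtain a b where ab: "a \<noteq> b" "f ` {..<2^n} = {a, b}"
    "2 * card {x. x < 2^n \<and> f x = a} = 2^n" "2 * card {x. x < 2^n \<and> f x = b} = 2^n"
    unfolding balanced_fun_def by blast
  have a: "a < 2^m" using ab(2) range by (metis imageE insertI1 lessThan_iff)
  have b: "b < 2^m" using ab(2) range by (metis imageE insertI1 insertCI lessThan_iff)
  obtain j where j: "bit a j \<noteq> bit b j" using ab(1) by (metis bit_eqI)
  have jm: "j < m" using j bit_high[OF a] bit_high[OF b] by (meson not_le)
  have fab: "f u = a \<or> f u = b" if "u < 2^n" for u using ab(2) that by auto
  define A where "A = {x. x < 2^n \<and> f x = a}"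
  define B where "B = {x. x < 2^n \<and> f x = b}"
  have cAB: "card A = card B" using ab(3,4) unfolding A_def B_def by simp
  have sets1: "{..<(2::nat)^n} \<inter> {u. f u = a} = A" unfolding A_def by auto
  have sets2: "{..<(2::nat)^n} \<inter> - {u. f u = a} = B" unfolding B_def using fab ab(1) by auto
  have "(\<Sum>u<(2::nat)^n. sgnb (bit (f u) j))
      = (\<Sum>u<(2::nat)^n. if f u = a then sgnb (bit a j) else sgnb (bit b j))"
    by (rule sum.cong) (use fab in auto)
  also have "\<dots> = of_nat (card A) * sgnb (bit a j) + of_nat (card B) * sgnb (bit b j)"
    by (simp add: sum.If_cases sets1 sets2)
  also have "\<dots> = 0" using cAB j by (auto simp: sgnb_def)
  finally have "gpk_prob n m f (2^j) 0 = 0" using prob_val[OF range jm] by simp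
  then show "(\<Prod>i<m. gpk_prob n m f (2^i) 0) = 0"
    using jm by (auto simp: prod_zero_iff)
qed

end
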